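(* Let $G$ be a connected graph. Then $KB_e(G)$ is connected if and only if there is no set of vertices $S \subsetneq V(G)$ such that (i) $N_{\overline{S}}(v)=N_{\overline{S}}(w)$ for every $v,w\in S$, and (ii) the induced subgraph $G[S]$ has at least one edge.
   Context: All graphs are finite, simple and undirected. A biclique of a graph $G$ is a maximal (with respect to inclusion) induced subgraph of $G$ that is a complete bipartite graph $K_{p,q}$ with $p,q\ge 1$. The edge-biclique graph $KB_e(G)$ is the graph with one vertex for each biclique of $G$, in which two distinct vertices are adjacent if and only if the corresponding bicliques of $G$ have at least one edge in common. For $S\subseteq V(G)$, $\overline{S}=V(G)\setminus S$, and for a vertex $v$, $N_{\overline{S}}(v)=N(v)\cap \overline{S}$ is the set of neighbours of $v$ lying in $\overline{S}$. *)

theory Defs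
  imports Main
begin

definition simple_graph :: "'a set \<Rightarrow> ('a \<Rightarrow> 'a \<Rightarrow> bool) \<Rightarrow> bool" where
  "simple_graph V E \<longleftrightarrow> finite V \<and> (\<forall>u v. E u v \<longrightarrow> u \<in> V \<and> v \<in> V)
     \<and> (\<forall>u v. E u v \<longrightarrow> E v u) \<and> (\<forall>v. \<not> E v v)"

definition connected_on :: "'b set \<Rightarrow> ('b \<Rightarrow> 'b \<Rightarrow> bool) \<Rightarrow> bool" where
  "connected_on W R \<longleftrightarrow>
     (\<forall>u\<in>W. \<forall>v\<in>W. (\<lambda>x y. x \<in> W \<and> y \<in> W \<and> R x y)\<^sup>*\<^sup>* u v)"

definition connected_graph :: "'a set \<Rightarrow> ('a \<Rightarrow> 'a \<Rightarrow> bool) \<Rightarrow> bool" where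
  "connected_graph V E \<longleftrightarrow> V \<noteq> {} \<and> connected_on V E"

definition induces_complete_bipartite :: "('a \<Rightarrow> 'a \<Rightarrow> bool) \<Rightarrow> 'a set \<Rightarrow> bool" where
  "induces_complete_bipartite E B \<longleftrightarrow>
     (\<exists>X Y. X \<noteq> {} \<and> Y \<noteq> {} \<and> X \<inter> Y = {} \<and> B = X \<union> Y
        \<and> (\<forall>x\<in>X. \<forall>y\<in>Y. E x y)
        \<and> (\<forall>x\<in>X. \<forall>x'\<in>X. \<not> E x x')
        \<and> (\<forall>y\<in>Y. \<forall>y'\<in>Y. \<not> E y y'))"

definition biclique :: "'a set \<Rightarrow> ('a \<Rightarrow> 'a \<Rightarrow> bool) \<Rightarrow> 'a set \<Rightarrow> bool" where
  "biclique V E B \<longleftrightarrow> B \<subseteq> V \<and> induces_complete_bipartite E B \<and>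
     (\<forall>B'. B \<subseteq> B' \<and> B' \<subseteq> V \<and> induces_complete_bipartite E B' \<longrightarrow> B' = B)"

definition bicliques :: "'a set \<Rightarrow> ('a \<Rightarrow> 'a \<Rightarrow> bool) \<Rightarrow> 'a set set" where
  "bicliques V E = {B. biclique V E B}"

text \<open>Two bicliques share an edge (edges of a biclique = edges of G induced on it).\<close>
definition share_edge :: "('a \<Rightarrow> 'a \<Rightarrow> bool) \<Rightarrow> 'a set \<Rightarrow> 'a set \<Rightarrow> bool" where
  "share_edge E B B' \<longleftrightarrow> (\<exists>u v. u \<in> B \<and> v \<in> B \<and> u \<in> B' \<and> v \<in> B' \<and> E u v)"

definition KBe_adj :: "('a \<Rightarrow> 'a \<Rightarrow> bool) \<Rightarrow> 'a set \<Rightarrow> 'a set \<Rightarrow> bool" where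
  "KBe_adj E B B' \<longleftrightarrow> B \<noteq> B' \<and> share_edge E B B'"

definition KBe_connected :: "'a set \<Rightarrow> ('a \<Rightarrow> 'a \<Rightarrow> bool) \<Rightarrow> bool" where
  "KBe_connected V E \<longleftrightarrow> connected_on (bicliques V E) (KBe_adj E)"

definition nbhd_outside :: "'a set \<Rightarrow> ('a \<Rightarrow> 'a \<Rightarrow> bool) \<Rightarrow> 'a set \<Rightarrow> 'a \<Rightarrow> 'a set" where
  "nbhd_outside V E S v = {u \<in> V - S. E v u}"

end

theory Submission
  imports Defs
begin

inductive st :: "('a \<Rightarrow> 'a \<Rightarrow> bool) \<Rightarrow> 'a \<times> 'a \<Rightarrow> 'a \<times> 'a \<Rightarrow> bool" for E where
  flip: "E x y \<Longrightarrow> st E (x,y) (y,x)"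
| p3: "E x y \<Longrightarrow> E x z \<Longrightarrow> y \<noteq> z \<Longrightarrow> \<not> E y z \<Longrightarrow> st E (x,y) (x,z)"

lemma st_sym:
  assumes sym: "\<And>u v. E u v \<Longrightarrow> E v u" and "st E p q"
  shows "st E q p"
  using assms(2)
proof cases
  case (flip x y) then show ?thesis using sym st.flip by fastforce
next
  case (p3 x y z) then show ?thesis using sym st.p3[of E x z y] by auto
qed

lemma eqv_sym:
  assumes sym: "\<And>u v. E u v \<Longrightarrow> E v u" and "(st E)\<^sup>*\<^sup>* p q"
  shows "(st E)\<^sup>*\<^sup>* q p"
  using assms(2)
proof (induction rule: rtranclp_induct)
  case base then show ?case by simp
next
  case (step y z)
  have "st E z y" using st_sym[OF sym step(2)] .
  then show ?case using step(3) by (rule converse_rtranclp_into_rtranclp)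
qed

lemma st_edge:
  assumes sym: "\<And>u v. E u v \<Longrightarrow> E v u" and "st E p q"
  shows "E (fst q) (snd q)"
  using assms(2) by cases (auto intro: sym)

lemma eqv_edge:
  assumes sym: "\<And>u v. E u v \<Longrightarrow> E v u" and "(st E)\<^sup>*\<^sup>* p q" and "E (fst p) (snd p)"
  shows "E (fst q) (snd q)"
  using assms(2,3)
  by (induction rule: rtranclp_induct) (auto intro: st_edge[OF sym])

lemma max_ext:
  assumes "finite V" "B0 \<subseteq> V" "induces_complete_bipartite E B0"
  shows "\<exists>B. biclique V E B \<and> B0 \<subseteq> B"
proof -
  let ?F = "{B. B0 \<subseteq> B \<and> B \<subseteq> V \<and> induces_complete_bipartite E B}"
  have "?F \<subseteq> Pow V" by auto
  then have fin: "finite ?F" using assms(1) finite_subset by blast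
  have ne: "B0 \<in> ?F" using assms by auto
  let ?m = "Max (card ` ?F)"
  have "?m \<in> card ` ?F" using fin ne by (intro Max_in) auto
  then obtain B where B: "B \<in> ?F" "card B = ?m" by auto
  have le: "card B' \<le> card B" if "B' \<in> ?F" for B'
    using B(2) fin that by (simp add: Max_ge)
  have "biclique V E B"
    unfolding biclique_def
  proof (intro conjI allI impI)
    show "B \<subseteq> V" "induces_complete_bipartite E B" using B(1) by auto
    fix B' assume h: "B \<subseteq> B' \<and> B' \<subseteq> V \<and> induces_complete_bipartite E B'"
    then have "B' \<in> ?F" using B(1) by auto
    then have "card B' \<le> card B" by (rule le)
    moreover have "finite B'" using h assms(1) finite_subset by blast
    ultimately show "B' = B" using h card_seteq by blast
  qed
  then show ?thesis using B(1) by auto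
qed

lemma bic_edge:
  assumes "B \<in> bicliques V E"
  shows "\<exists>x y. x \<in> B \<and> y \<in> B \<and> E x y"
proof -
  have "induces_complete_bipartite E B" using assms unfolding bicliques_def biclique_def by simp
  then show ?thesis unfolding induces_complete_bipartite_def by blast
qed

lemma tri:
  assumes sym: "\<And>u v. E u v \<Longrightarrow> E v u"
    and ab: "E a b" and ac: "E a c"
    and n1: "\<not> (st E)\<^sup>*\<^sup>* (b,c) (a,b)" and n2: "\<not> (st E)\<^sup>*\<^sup>* (b,c) (a,c)"
    and "(st E)\<^sup>*\<^sup>* (b,c) q"
  shows "E a (fst q) \<and> E a (snd q) \<and> \<not> (st E)\<^sup>*\<^sup>* (b,c) (a, fst q) \<and> \<not> (st E)\<^sup>*\<^sup>* (b,c) (a, snd q)"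
  using assms(6)
proof (induction rule: rtranclp_induct)
  case base then show ?case using ab ac n1 n2 by simp
next
  case (step q r)
  from step(2) show ?case
  proof cases
    case (flip x y) then show ?thesis using step(3) by auto
  next
    case (p3 x y z)
    have IH: "E a x" "E a y" "\<not> (st E)\<^sup>*\<^sup>* (b,c) (a,x)" "\<not> (st E)\<^sup>*\<^sup>* (b,c) (a,y)"
      using step(3) p3 by auto
    have r: "(st E)\<^sup>*\<^sup>* (b,c) (x,z)" using step(1,2) p3 by auto
    have az: "E a z"
    proof (rule ccontr)
      assume naz: "\<not> E a z"
      have "a \<noteq> z" using IH(2) p3 sym by blast
      have "st E (x,a) (x,z)" using p3 IH(1) sym naz \<open>a \<noteq> z\<close> by (intro st.p3) auto
      moreover have "st E (a,x) (x,a)" using IH(1) by (rule st.flip)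
      ultimately have "(st E)\<^sup>*\<^sup>* (a,x) (x,z)" by auto
      then have "(st E)\<^sup>*\<^sup>* (x,z) (a,x)" using eqv_sym[of E, OF sym] by blast
      then show False using r IH(3) by (meson rtranclp_trans)
    qed
    have naz2: "\<not> (st E)\<^sup>*\<^sup>* (b,c) (a,z)"
    proof
      assume h: "(st E)\<^sup>*\<^sup>* (b,c) (a,z)"
      have "st E (a,y) (a,z)" using p3 IH(2) az by (intro st.p3) auto
      then have "(st E)\<^sup>*\<^sup>* (a,z) (a,y)" using eqv_sym[of E, OF sym] by blast
      then show False using h IH(4) by (meson rtranclp_trans)
    qed
    show ?thesis using p3 IH az naz2 by auto
  qed
qed

lemma icb2:
  assumes e: "E x y" and irr: "\<And>v. \<not> E v v"
  shows "induces_complete_bipartite E {x,y}"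
proof -
  have xy: "x \<noteq> y" using e irr by blast
  have "{x} \<noteq> {} \<and> {y} \<noteq> {} \<and> {x} \<inter> {y} = {} \<and> {x, y} = {x} \<union> {y} \<and> (\<forall>a\<in>{x}. \<forall>b\<in>{y}. E a b)
    \<and> (\<forall>a\<in>{x}. \<forall>b\<in>{x}. \<not> E a b) \<and> (\<forall>a\<in>{y}. \<forall>b\<in>{y}. \<not> E a b)"
    using xy e irr by (simp add: insert_commute)
  then show ?thesis unfolding induces_complete_bipartite_def by (rule exI[of _ "{x}", OF exI[of _ "{y}"]])
qed

lemma icb3:
  assumes e1: "E x y" and e2: "E x z" and n: "\<not> E y z" and irr: "\<And>v. \<not> E v v"
    and sym: "\<And>u v. E u v \<Longrightarrow> E v u"
  shows "induces_complete_bipartite E {x,y,z}"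
proof -
  have xy: "x \<noteq> y" "x \<noteq> z" using e1 e2 irr by blast+
  have n2: "\<not> E z y" using n sym by blast
  have "{x} \<noteq> {} \<and> {y,z} \<noteq> {} \<and> {x} \<inter> {y,z} = {} \<and> {x, y, z} = {x} \<union> {y,z} \<and> (\<forall>a\<in>{x}. \<forall>b\<in>{y,z}. E a b)
    \<and> (\<forall>a\<in>{x}. \<forall>b\<in>{x}. \<not> E a b) \<and> (\<forall>a\<in>{y,z}. \<forall>b\<in>{y,z}. \<not> E a b)"
    using xy e1 e2 irr n n2 by (simp add: insert_commute)
  then show ?thesis unfolding induces_complete_bipartite_def by (rule exI[of _ "{x}", OF exI[of _ "{y,z}"]])
qed

lemma st_common:
  assumes sg: "simple_graph V E" and "st E q r"
  shows "\<exists>B \<in> bicliques V E. fst q \<in> B \<and> snd q \<in> B \<and> fst r \<in> B \<and> snd r \<in> B"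
proof -
  have sym: "\<And>u v. E u v \<Longrightarrow> E v u" and irr: "\<And>v. \<not> E v v" and fin: "finite V"
    and inV: "\<And>u v. E u v \<Longrightarrow> u \<in> V \<and> v \<in> V"
    using sg unfolding simple_graph_def by blast+
  show ?thesis
  using assms(2)
  proof cases
    case (flip x y)
    have "{x,y} \<subseteq> V" using inV[OF flip(3)] by simp
    moreover have "induces_complete_bipartite E {x,y}" using icb2[of E x y, OF flip(3) irr] .
    ultimately obtain B where B: "biclique V E B" "{x,y} \<subseteq> B" using max_ext[OF fin] by blast
    then have "B \<in> bicliques V E" unfolding bicliques_def by simp
    then show ?thesis using flip B(2) by auto
  next
    case (p3 x y z)
    have "{x,y,z} \<subseteq> V" using inV[OF p3(3)] inV[OF p3(4)] by simp
    moreover have "induces_complete_bipartite E {x,y,z}" using icb3[of E x y z, OF p3(3,4,6) irr sym] .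
    ultimately obtain B where B: "biclique V E B" "{x,y,z} \<subseteq> B" using max_ext[OF fin] by blast
    then have "B \<in> bicliques V E" unfolding bicliques_def by simp
    then show ?thesis using p3 B(2) by auto
  qed
qed

lemma allcon:
  assumes sg: "simple_graph V E"
    and all: "\<forall>p q. E (fst p) (snd p) \<longrightarrow> E (fst q) (snd q) \<longrightarrow> (st E)\<^sup>*\<^sup>* p q"
  shows "KBe_connected V E"
  unfolding KBe_connected_def connected_on_def
proof (intro ballI)
  have sym: "\<And>u v. E u v \<Longrightarrow> E v u" using sg unfolding simple_graph_def by blast
  fix B1 B2 assume B1: "B1 \<in> bicliques V E" and B2: "B2 \<in> bicliques V E"
  let ?R = "\<lambda>x y. x \<in> bicliques V E \<and> y \<in> bicliques V E \<and> KBe_adj E x y"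
  have shareR: "?R\<^sup>*\<^sup>* B B'" if "B \<in> bicliques V E" "B' \<in> bicliques V E" "x\<in>B" "y\<in>B" "x\<in>B'" "y\<in>B'" "E x y"
    for B B' x y
  proof (cases "B = B'")
    case True then show ?thesis by simp
  next
    case False
    then have "?R B B'" using that unfolding KBe_adj_def share_edge_def by blast
    then show ?thesis by blast
  qed
  obtain x1 y1 where 1: "x1 \<in> B1" "y1 \<in> B1" "E x1 y1" using bic_edge[OF B1] by blast
  obtain x2 y2 where 2: "x2 \<in> B2" "y2 \<in> B2" "E x2 y2" using bic_edge[OF B2] by blast
  have key: "\<forall>B\<in>bicliques V E. fst q \<in> B \<and> snd q \<in> B \<longrightarrow> ?R\<^sup>*\<^sup>* B1 B"
    if "(st E)\<^sup>*\<^sup>* (x1,y1) q" for q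
    using that
  proof (induction rule: rtranclp_induct)
    case base then show ?case using shareR[OF B1 _ 1(1,2) _ _ 1(3)] by auto
  next
    case (step q r)
    obtain Bs where Bs: "Bs \<in> bicliques V E" "fst q \<in> Bs" "snd q \<in> Bs" "fst r \<in> Bs" "snd r \<in> Bs"
      using st_common[OF sg step(2)] by blast
    have "?R\<^sup>*\<^sup>* B1 Bs" using step(3) Bs by blast
    moreover have "E (fst r) (snd r)" using st_edge[of E, OF sym step(2)] .
    ultimately show ?case using shareR[OF Bs(1) _ Bs(4,5)] by (meson rtranclp_trans)
  qed
  have "(st E)\<^sup>*\<^sup>* (x1,y1) (x2,y2)" using all 1 2 by auto
  then show "?R\<^sup>*\<^sup>* B1 B2" using key B2 2 by auto
qed

lemma adj_all:
  assumes sg: "simple_graph V E" and cg: "connected_graph V E"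
    and h: "\<forall>u v w. E u v \<longrightarrow> E u w \<longrightarrow> (st E)\<^sup>*\<^sup>* (u,v) (u,w)"
    and p: "E p1 p2" and r: "E r1 r2"
  shows "(st E)\<^sup>*\<^sup>* (p1,p2) (r1,r2)"
proof -
  have sym: "\<And>u v. E u v \<Longrightarrow> E v u" using sg unfolding simple_graph_def by blast
  have V: "p1 \<in> V" "r1 \<in> V" using sg p r unfolding simple_graph_def by auto
  have path: "(\<lambda>x y. x \<in> V \<and> y \<in> V \<and> E x y)\<^sup>*\<^sup>* p1 r1"
    using cg V unfolding connected_graph_def connected_on_def by blast
  have "\<forall>t. E z t \<longrightarrow> (st E)\<^sup>*\<^sup>* (p1,p2) (z,t)" if "(\<lambda>x y. x \<in> V \<and> y \<in> V \<and> E x y)\<^sup>*\<^sup>* p1 z" for z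
    using that
  proof (induction rule: rtranclp_induct)
    case base then show ?case using h p by blast
  next
    case (step z z')
    show ?case
    proof (intro allI impI)
      fix t assume "E z' t"
      have a: "(st E)\<^sup>*\<^sup>* (z',z) (z',t)" using h sym step(2) \<open>E z' t\<close> by blast
      have b: "st E (z,z') (z',z)" using step(2) by (auto intro: st.flip)
      have c: "(st E)\<^sup>*\<^sup>* (p1,p2) (z,z')" using step by blast
      show "(st E)\<^sup>*\<^sup>* (p1,p2) (z',t)" using a b c by (meson rtranclp.rtrancl_into_rtrancl rtranclp_trans)
    qed
  qed
  then show ?thesis using path r by blast
qed

lemma L1:
  assumes icb: "induces_complete_bipartite E B" and BV: "B \<subseteq> V"
    and xy: "x \<in> B" "y \<in> B" "x \<in> S" "y \<in> S" "E x y"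
    and md: "\<forall>v\<in>S. \<forall>w\<in>S. nbhd_outside V E S v = nbhd_outside V E S w"
    and sym: "\<And>u v. E u v \<Longrightarrow> E v u"
  shows "B \<subseteq> S"
proof
  fix t assume tB: "t \<in> B"
  show "t \<in> S"
  proof (rule ccontr)
    assume tS: "t \<notin> S"
    have tV: "t \<in> V" using tB BV by auto
    have eq: "E x t \<longleftrightarrow> E y t"
    proof -
      have "nbhd_outside V E S x = nbhd_outside V E S y" using md xy by blast
      then show ?thesis using tV tS unfolding nbhd_outside_def by blast
    qed
    obtain X Y where XY: "X \<inter> Y = {}" "B = X \<union> Y" "\<forall>x\<in>X. \<forall>y\<in>Y. E x y"
      "\<forall>x\<in>X. \<forall>x'\<in>X. \<not> E x x'" "\<forall>y\<in>Y. \<forall>y'\<in>Y. \<not> E y y'"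
      using icb unfolding induces_complete_bipartite_def by blast
    show False using XY xy tB eq sym by blast
  qed
qed

lemma exit_edge:
  assumes "(\<lambda>x y. x \<in> V \<and> y \<in> V \<and> E x y)\<^sup>*\<^sup>* p q" "p \<in> S" "q \<notin> S"
  shows "\<exists>s t. s \<in> S \<and> t \<notin> S \<and> s \<in> V \<and> t \<in> V \<and> E s t"
  using assms
proof (induction rule: rtranclp_induct)
  case base then show ?case by simp
next
  case (step y z)
  then show ?case by blast
qed

theorem theorem1:
  fixes V :: "'a set" and E :: "'a \<Rightarrow> 'a \<Rightarrow> bool"
  assumes "simple_graph V E" and "connected_graph V E"
  shows "KBe_connected V E \<longleftrightarrow>
    \<not> (\<exists>S. S \<subset> V
          \<and> (\<forall>v\<in>S. \<forall>w\<in>S. nbhd_outside V E S v = nbhd_outside V E S w)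
          \<and> (\<exists>u\<in>S. \<exists>w\<in>S. E u w))"
proof -
  note sg = assms(1) and cg = assms(2)
  have sym: "\<And>u v. E u v \<Longrightarrow> E v u" and irr: "\<And>v. \<not> E v v" and fin: "finite V"
    and inV: "\<And>u v. E u v \<Longrightarrow> u \<in> V \<and> v \<in> V"
    using sg unfolding simple_graph_def by blast+
  show ?thesis
  proof
    assume kc: "KBe_connected V E"
    show "\<not> (\<exists>S. S \<subset> V
          \<and> (\<forall>v\<in>S. \<forall>w\<in>S. nbhd_outside V E S v = nbhd_outside V E S w)
          \<and> (\<exists>u\<in>S. \<exists>w\<in>S. E u w))"
    proof
      assume "\<exists>S. S \<subset> V
          \<and> (\<forall>v\<in>S. \<forall>w\<in>S. nbhd_outside V E S v = nbhd_outside V E S w)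
          \<and> (\<exists>u\<in>S. \<exists>w\<in>S. E u w)"
      then obtain S u w where S: "S \<subset> V" and md: "\<forall>v\<in>S. \<forall>w\<in>S. nbhd_outside V E S v = nbhd_outside V E S w"
        and uw: "u \<in> S" "w \<in> S" "E u w" by blast
      obtain t0 where t0: "t0 \<in> V" "t0 \<notin> S" using S by blast
      have "(\<lambda>x y. x \<in> V \<and> y \<in> V \<and> E x y)\<^sup>*\<^sup>* u t0"
        using cg t0 inV uw unfolding connected_graph_def connected_on_def by blast
      then obtain s t where st: "s \<in> S" "t \<notin> S" "s \<in> V" "t \<in> V" "E s t"
        using exit_edge[of V E u t0 S] uw t0 by blast
      obtain B1 where B1: "biclique V E B1" "{u,w} \<subseteq> B1"
        using max_ext[OF fin _ icb2[of E u w, OF uw(3) irr]] inV uw by blast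
      obtain B2 where B2: "biclique V E B2" "{s,t} \<subseteq> B2"
        using max_ext[OF fin _ icb2[of E s t, OF st(5) irr]] st by blast
      let ?R = "\<lambda>x y. x \<in> bicliques V E \<and> y \<in> bicliques V E \<and> KBe_adj E x y"
      have allR: "\<forall>x\<in>bicliques V E. \<forall>y\<in>bicliques V E. ?R\<^sup>*\<^sup>* x y"
        using kc unfolding KBe_connected_def connected_on_def .
      have B1b: "B1 \<in> bicliques V E" and B2b: "B2 \<in> bicliques V E"
        using B1(1) B2(1) unfolding bicliques_def by simp_all
      have path: "?R\<^sup>*\<^sup>* B1 B2" using allR B1b B2b by blast
      have sub: "B \<subseteq> S" if "?R\<^sup>*\<^sup>* B1 B" for B
        using that
      proof (induction rule: rtranclp_induct)
        case base
        have "induces_complete_bipartite E B1" "B1 \<subseteq> V" using B1(1) unfolding biclique_def by simp_all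
        then show ?case using L1[of E B1 V u w S, OF _ _ _ _ uw md sym] B1(2) by blast
      next
        case (step B B')
        then obtain x y where xy: "x \<in> B" "y \<in> B" "x \<in> B'" "y \<in> B'" "E x y"
          unfolding KBe_adj_def share_edge_def by blast
        have "biclique V E B'" using step(2) unfolding bicliques_def by simp
        then have "induces_complete_bipartite E B'" "B' \<subseteq> V" unfolding biclique_def by simp_all
        moreover have "x \<in> S" "y \<in> S" using xy(1,2) step(3) by blast+
        ultimately show ?case using L1[of E B' V x y S, OF _ _ xy(3,4) _ _ xy(5) md sym] by blast
      qed
      show False using sub[OF path] B2 st by blast
    qed
  next
    assume nS: "\<not> (\<exists>S. S \<subset> V
          \<and> (\<forall>v\<in>S. \<forall>w\<in>S. nbhd_outside V E S v = nbhd_outside V E S w)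
          \<and> (\<exists>u\<in>S. \<exists>w\<in>S. E u w))"
    show "KBe_connected V E"
    proof (rule ccontr)
      assume nk: "\<not> KBe_connected V E"
      have "\<not> (\<forall>u v w. E u v \<longrightarrow> E u w \<longrightarrow> (st E)\<^sup>*\<^sup>* (u,v) (u,w))"
      proof
        assume h: "\<forall>u v w. E u v \<longrightarrow> E u w \<longrightarrow> (st E)\<^sup>*\<^sup>* (u,v) (u,w)"
        have "\<forall>p q. E (fst p) (snd p) \<longrightarrow> E (fst q) (snd q) \<longrightarrow> (st E)\<^sup>*\<^sup>* p q"
          using adj_all[OF sg cg h] by auto
        then show False using allcon[OF sg] nk by blast
      qed
      then obtain u v w where uvw: "E u v" "E u w" "\<not> (st E)\<^sup>*\<^sup>* (u,v) (u,w)" by blast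
      have "v \<noteq> w" using uvw by auto
      have "E v w"
      proof (rule ccontr)
        assume "\<not> E v w"
        then have "st E (u,v) (u,w)" using uvw \<open>v \<noteq> w\<close> by (intro st.p3)
        then show False using uvw by blast
      qed
      have esym: "(st E)\<^sup>*\<^sup>* p q \<Longrightarrow> (st E)\<^sup>*\<^sup>* q p" for p q using eqv_sym[of E, OF sym] by blast
      have fl: "(st E)\<^sup>*\<^sup>* (x,y) (y,x)" if "E x y" for x y using st.flip[of E x y, OF that] by blast
      have tr: "(st E)\<^sup>*\<^sup>* p r" if "(st E)\<^sup>*\<^sup>* p q" "(st E)\<^sup>*\<^sup>* q r" for p q r
        using that by (rule rtranclp_trans)
      have "\<exists>a b c. E a b \<and> E a c \<and> E b c \<and> \<not> (st E)\<^sup>*\<^sup>* (b,c) (a,b) \<and> \<not> (st E)\<^sup>*\<^sup>* (b,c) (a,c)"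
      proof (cases "(st E)\<^sup>*\<^sup>* (v,w) (u,v)")
        case True
        have n1: "\<not> (st E)\<^sup>*\<^sup>* (u,w) (v,u)"
        proof
          assume h: "(st E)\<^sup>*\<^sup>* (u,w) (v,u)"
          have "(st E)\<^sup>*\<^sup>* (u,w) (u,v)" using tr[OF h fl[OF sym[OF uvw(1)]]] .
          then show False using esym uvw(3) by blast
        qed
        have n2: "\<not> (st E)\<^sup>*\<^sup>* (u,w) (v,w)"
        proof
          assume h: "(st E)\<^sup>*\<^sup>* (u,w) (v,w)"
          have "(st E)\<^sup>*\<^sup>* (u,w) (u,v)" using tr[OF h True] .
          then show False using esym uvw(3) by blast
        qed
        have "E v u" using sym uvw(1) .
        then show ?thesis using n1 n2 \<open>E v w\<close> uvw(2) by blast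
      next
        case F1: False
        show ?thesis
        proof (cases "(st E)\<^sup>*\<^sup>* (v,w) (u,w)")
          case True
          have n1: "\<not> (st E)\<^sup>*\<^sup>* (u,v) (w,u)"
          proof
            assume h: "(st E)\<^sup>*\<^sup>* (u,v) (w,u)"
            have "(st E)\<^sup>*\<^sup>* (u,v) (u,w)" using tr[OF h fl[OF sym[OF uvw(2)]]] .
            then show False using uvw(3) by blast
          qed
          have n2: "\<not> (st E)\<^sup>*\<^sup>* (u,v) (w,v)"
          proof
            assume h: "(st E)\<^sup>*\<^sup>* (u,v) (w,v)"
            have "(st E)\<^sup>*\<^sup>* (u,v) (u,w)" using tr[OF tr[OF h fl[OF sym[OF \<open>E v w\<close>]]] True] .
            then show False using uvw(3) by blast
          qed
          have "E w u" "E w v" using sym uvw(2) \<open>E v w\<close> by blast+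
          then show ?thesis using n1 n2 uvw(1) by blast
        next
          case False
          then show ?thesis using F1 uvw \<open>E v w\<close> by blast
        qed
      qed
      then obtain a b c where abc: "E a b" "E a c" "E b c" "\<not> (st E)\<^sup>*\<^sup>* (b,c) (a,b)" "\<not> (st E)\<^sup>*\<^sup>* (b,c) (a,c)"
        by blast
      define S where "S = {x. \<exists>y. (st E)\<^sup>*\<^sup>* (b,c) (x,y)}"
      have cls_edge: "E x y" if "(st E)\<^sup>*\<^sup>* (b,c) (x,y)" for x y
        using eqv_edge[of E, OF sym that] abc(3) by simp
      have SV: "S \<subseteq> V" unfolding S_def using cls_edge inV by blast
      have aS: "a \<notin> S"
      proof
        assume "a \<in> S"
        then obtain y where "(st E)\<^sup>*\<^sup>* (b,c) (a,y)" unfolding S_def by blast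
        then show False using tri[of E a b c "(a,y)", OF sym abc(1,2,4,5)] irr by auto
      qed
      have aV: "a \<in> V" using inV abc by blast
      have bS: "b \<in> S" "c \<in> S" unfolding S_def using fl[OF abc(3)] by blast+
      have sndS: "y \<in> S" if "(st E)\<^sup>*\<^sup>* (b,c) (x,y)" for x y
      proof -
        have "(st E)\<^sup>*\<^sup>* (b,c) (y,x)" by (rule rtranclp_trans[OF that fl[OF cls_edge[OF that]]])
        then show ?thesis unfolding S_def by blast
      qed
      have adj1: "E y t" if "(st E)\<^sup>*\<^sup>* (b,c) (x,y)" "t \<notin> S" "E x t" for x y t
      proof (rule ccontr)
        assume "\<not> E y t"
        have "y \<noteq> t" using sndS[OF that(1)] that(2) by blast
        have "st E (x,y) (x,t)" using cls_edge[OF that(1)] that(3) \<open>y \<noteq> t\<close> \<open>\<not> E y t\<close> by (intro st.p3)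
        then have "(st E)\<^sup>*\<^sup>* (b,c) (x,t)" using that(1) by auto
        then show False using sndS that(2) by blast
      qed
      have adj: "E x t \<longleftrightarrow> E y t" if "(st E)\<^sup>*\<^sup>* (b,c) (x,y)" "t \<notin> S" for x y t
      proof -
        have "(st E)\<^sup>*\<^sup>* (b,c) (y,x)" by (rule rtranclp_trans[OF that(1) fl[OF cls_edge[OF that(1)]]])
        then show ?thesis using adj1 that by blast
      qed
      have inv: "\<forall>t. t \<notin> S \<longrightarrow> (E (fst q) t \<longleftrightarrow> E b t) \<and> (E (snd q) t \<longleftrightarrow> E b t)"
        if "(st E)\<^sup>*\<^sup>* (b,c) q" for q
        using that
      proof (induction rule: rtranclp_induct)
        case base then show ?case using adj[of b c] by auto
      next
        case (step q r)
        from step(2) show ?case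
        proof cases
          case (flip x y) then show ?thesis using step(3) by auto
        next
          case (p3 x y z)
          have "(st E)\<^sup>*\<^sup>* (b,c) (x,z)" using step(1,2) p3 by auto
          then show ?thesis using step(3) p3 adj[of x z] by auto
        qed
      qed
      have allS: "E v t \<longleftrightarrow> E b t" if vS: "v \<in> S" and tS: "t \<notin> S" for v t
      proof -
        obtain y where "(st E)\<^sup>*\<^sup>* (b,c) (v,y)" using vS unfolding S_def by blast
        from inv[OF this] tS show ?thesis by simp
      qed
      have md: "\<forall>v\<in>S. \<forall>w\<in>S. nbhd_outside V E S v = nbhd_outside V E S w"
      proof (intro ballI)
        fix v w assume "v \<in> S" "w \<in> S"
        then show "nbhd_outside V E S v = nbhd_outside V E S w"
          unfolding nbhd_outside_def using allS by auto
      qed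
      have "S \<subset> V" using SV aS aV by blast
      moreover have "\<exists>u\<in>S. \<exists>w\<in>S. E u w" using bS abc(3) by blast
      ultimately have "\<exists>S. S \<subset> V
          \<and> (\<forall>v\<in>S. \<forall>w\<in>S. nbhd_outside V E S v = nbhd_outside V E S w)
          \<and> (\<exists>u\<in>S. \<exists>w\<in>S. E u w)" using md by blast
      then show False using nS by blast
    qed
  qed
qed

end
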